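(* For every $n\in\mathbb N$, $$\varphi^*(n)=\sum_{\substack{d\mid n\\ \kappa(d)=\kappa(n)}}\varphi(d).$$
   Context: $\varphi$ is Euler's totient function. $d\mid\mid n$ means $d\mid n$ and $\gcd(d,n/d)=1$; $(j,n)_*=\max\{d: d\mid j,\ d\mid\mid n\}$; $\varphi^*(n)=\#\{1\le j\le n:(j,n)_*=1\}$. $\kappa(n)=\prod_{p\mid n}p$ is the squarefree kernel. *)

theory Defs
  imports "HOL-Number_Theory.Number_Theory"
begin

definition unitary_dvd :: "nat \<Rightarrow> nat \<Rightarrow> bool" where
  "unitary_dvd d n \<longleftrightarrow> d dvd n \<and> coprime d (n div d)"

definition bi_gcd :: "nat \<Rightarrow> nat \<Rightarrow> nat" where
  "bi_gcd j n = Max {d. d dvd j \<and> unitary_dvd d n}"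

definition unitary_totient :: "nat \<Rightarrow> nat" where
  "unitary_totient n = card {j \<in> {1..n}. bi_gcd j n = 1}"

definition kernel :: "nat \<Rightarrow> nat" where
  "kernel n = (\<Prod>p\<in>prime_factors n. p)"

end

theory Submission
  imports Defs
begin

lemma L0:
  fixes p x y :: nat
  assumes "prime p" "x \<noteq> 0" "y \<noteq> 0"
  shows "p ^ multiplicity p (x*y) dvd x \<longleftrightarrow> \<not> p dvd y"
proof -
  have "multiplicity p (x*y) = multiplicity p x + multiplicity p y"
    using assms by (simp add: prime_elem_multiplicity_mult_distrib)
  thus ?thesis
    using power_dvd_iff_le_multiplicity[where p=p and n="multiplicity p x + multiplicity p y" and x=x]
      multiplicity_eq_zero_iff[where p=p and x=y] assms prime_gt_1_nat[of p] by simp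
qed

lemma pf_kernel: "prime_factors (kernel n) = prime_factors n"
proof -
  have "prime_factors (kernel n) = \<Union>((prime_factors \<circ> (\<lambda>p. p)) ` prime_factors n)"
    unfolding kernel_def by (rule prime_factors_prod) auto
  also have "\<dots> = prime_factors n"
  proof -
    have "\<And>p. p \<in> prime_factors n \<Longrightarrow> prime_factors p = {p}"
      by (rule prime_prime_factors) (simp add: in_prime_factors_imp_prime)
    thus ?thesis by auto
  qed
  finally show ?thesis .
qed

lemma kernel_iff:
  fixes n d :: nat
  assumes "n \<ge> 1" "d dvd n"
  shows "kernel d = kernel n \<longleftrightarrow> (\<forall>p\<in>prime_factors n. \<not> p ^ multiplicity p n dvd (n div d))"
proof -
  have d0: "d \<noteq> 0" using assms by auto
  have nd: "n = (n div d) * d" using assms by simp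
  have q0: "n div d \<noteq> 0" using assms d0 by (metis nd mult_0 not_one_le_zero)
  have sub: "prime_factors d \<subseteq> prime_factors n"
    using assms by (intro dvd_prime_factors) auto
  have "kernel d = kernel n \<longleftrightarrow> prime_factors d = prime_factors n"
    by (metis pf_kernel kernel_def)
  also have "\<dots> \<longleftrightarrow> (\<forall>p\<in>prime_factors n. p dvd d)"
    using sub d0 by (auto simp: in_prime_factors_iff)
  also have "\<dots> \<longleftrightarrow> (\<forall>p\<in>prime_factors n. \<not> p ^ multiplicity p n dvd (n div d))"
  proof -
    have "\<And>p. p \<in> prime_factors n \<Longrightarrow> (p ^ multiplicity p n dvd (n div d) \<longleftrightarrow> \<not> p dvd d)"
      using L0[of _ "n div d" d] q0 d0 nd by (metis in_prime_factors_imp_prime)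
    thus ?thesis by blast
  qed
  finally show ?thesis .
qed

lemma unitary_pp:
  fixes n p :: nat
  assumes "n \<ge> 1" "p \<in> prime_factors n"
  shows "unitary_dvd (p ^ multiplicity p n) n"
proof -
  have pr: "prime p" using assms by auto
  have dv: "p ^ multiplicity p n dvd n" by (rule multiplicity_dvd)
  then obtain e where e: "n = p ^ multiplicity p n * e" by blast
  have e0: "e \<noteq> 0" using e assms by (metis mult_0_right not_one_le_zero)
  have "\<not> p dvd e"
    using L0[of p "p ^ multiplicity p n" e] pr e0 e by auto
  hence "coprime p e" using pr by (simp add: prime_imp_coprime)
  hence "coprime (p ^ multiplicity p n) e" by simp
  moreover have "n div p ^ multiplicity p n = e" using e pr
    by (metis nonzero_mult_div_cancel_left power_not_zero not_prime_0)
  ultimately show ?thesis using dv unfolding unitary_dvd_def by simp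
qed

lemma bi_gcd_iff:
  fixes n j :: nat
  assumes "n \<ge> 1"
  shows "bi_gcd j n = 1 \<longleftrightarrow> (\<forall>p\<in>prime_factors n. \<not> p ^ multiplicity p n dvd j)"
proof -
  define D where "D = {d. d dvd j \<and> unitary_dvd d n}"
  have fin: "finite D"
  proof (rule finite_subset[of _ "{..n}"])
    show "D \<subseteq> {..n}" unfolding D_def unitary_dvd_def using assms
      by (auto simp: dvd_imp_le)
  qed simp
  have one: "1 \<in> D" unfolding D_def unitary_dvd_def by simp
  have pos: "d \<ge> 1" if "d \<in> D" for d
  proof -
    have "d dvd n" using that unfolding D_def unitary_dvd_def by simp
    hence "d \<noteq> 0" using assms by (metis dvd_0_left_iff not_one_le_zero)
    thus ?thesis by simp
  qed
  have "bi_gcd j n = 1 \<longleftrightarrow> (\<forall>d\<in>D. d = 1)"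
  proof
    assume "bi_gcd j n = 1"
    hence M: "Max D = 1" unfolding bi_gcd_def D_def by simp
    show "\<forall>d\<in>D. d = 1"
    proof
      fix d assume "d \<in> D"
      hence "d \<le> Max D" using fin by simp
      thus "d = 1" using M pos[OF \<open>d \<in> D\<close>] by linarith
    qed
  next
    assume "\<forall>d\<in>D. d = 1"
    hence "D = {1}" using one by blast
    thus "bi_gcd j n = 1" unfolding bi_gcd_def D_def[symmetric] by simp
  qed
  also have "\<dots> \<longleftrightarrow> (\<forall>p\<in>prime_factors n. \<not> p ^ multiplicity p n dvd j)"
  proof
    assume H: "\<forall>d\<in>D. d = 1"
    show "\<forall>p\<in>prime_factors n. \<not> p ^ multiplicity p n dvd j"
    proof (intro ballI notI)
      fix p assume p: "p \<in> prime_factors n" and dj: "p ^ multiplicity p n dvd j"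
      have "p ^ multiplicity p n \<in> D" unfolding D_def using unitary_pp[OF assms p] dj by simp
      hence "p ^ multiplicity p n = 1" using H by blast
      moreover have "multiplicity p n > 0" using p
        by (simp add: prime_factors_multiplicity)
      moreover have "p > 1" using p prime_gt_1_nat by auto
      ultimately show False by (metis one_less_power less_irrefl)
    qed
  next
    assume H: "\<forall>p\<in>prime_factors n. \<not> p ^ multiplicity p n dvd j"
    show "\<forall>d\<in>D. d = 1"
    proof (rule ballI, rule ccontr)
      fix d assume dD: "d \<in> D" and d1: "d \<noteq> 1"
      have dj: "d dvd j" and ud: "d dvd n" and cp: "coprime d (n div d)"
        using dD unfolding D_def unitary_dvd_def by auto
      have d0: "d \<noteq> 0" using pos[OF dD] by simp
      obtain p where pr: "prime p" and pd: "p dvd d" using d1 prime_factor_nat by blast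
      have e: "n = d * (n div d)" using ud by simp
      have e0: "n div d \<noteq> 0" using e assms by (metis mult_0_right not_one_le_zero)
      have "\<not> p dvd (n div d)"
      proof
        assume "p dvd n div d"
        hence "is_unit p" by (rule coprime_common_divisor[OF cp pd])
        thus False using pr not_prime_unit by blast
      qed
      hence "p ^ multiplicity p n dvd d"
        using L0[of p d "n div d"] pr d0 e0 e[symmetric] by metis
      hence "p ^ multiplicity p n dvd j" using dj by (rule dvd_trans)
      moreover have "p \<in> prime_factors n"
      proof -
        have "p dvd n" using pd ud by (rule dvd_trans)
        thus ?thesis using pr assms by (simp add: in_prime_factors_iff)
      qed
      ultimately show False using H by blast
    qed
  qed
  finally show ?thesis .
qed

theorem corollary7p3:
  fixes n :: nat
  assumes "n \<ge> 1"
  shows "unitary_totient n = (\<Sum>d\<in>{d. d dvd n \<and> kernel d = kernel n}. totient d)"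
proof -
  have n0: "n > 0" using assms by simp
  define Q where "Q = (\<lambda>g. \<forall>p\<in>prime_factors n. \<not> p ^ multiplicity p n dvd g)"
  define A where "A = (\<lambda>d. {k\<in>{0<..n}. gcd k n = d})"
  have Qg: "Q j \<longleftrightarrow> Q (gcd j n)" for j
    unfolding Q_def using multiplicity_dvd by (auto intro: dvd_trans)
  have "unitary_totient n = card {j\<in>{1..n}. Q j}"
    unfolding unitary_totient_def Q_def using bi_gcd_iff[OF assms] by simp
  also have "{j\<in>{1..n}. Q j} = (\<Union>g\<in>{g. g dvd n \<and> Q g}. A g)"
    unfolding A_def using Qg by auto
  also have "card \<dots> = (\<Sum>g\<in>{g. g dvd n \<and> Q g}. card (A g))"
    using n0 by (intro card_UN_disjoint) (auto simp: A_def)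
  also have "\<dots> = (\<Sum>g\<in>{g. g dvd n \<and> Q g}. totient (n div g))"
    unfolding A_def by (intro sum.cong refl card_gcd_eq_totient n0) auto
  also have "\<dots> = (\<Sum>d\<in>{d. d dvd n \<and> Q (n div d)}. totient d)"
    using n0 by (intro sum.reindex_bij_witness[of _ "(div) n" "(div) n"])
      (auto elim!: dvdE simp: dvd_div_eq_mult)
  also have "{d. d dvd n \<and> Q (n div d)} = {d. d dvd n \<and> kernel d = kernel n}"
    unfolding Q_def using kernel_iff[OF assms] by auto
  finally show ?thesis .
qed

end
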